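(* Let $\lambda_{\operatorname{gr}}\ge0$ and let $X=(V,E,T)$ be an $(s,k,K)$-two layer system whose ground graph is a $\lambda_{\operatorname{gr}}$-expander. Let $A\subseteq E$ be non-empty, $0<\mu<1$, and $U\subseteq V$ a set of vertices that are $\mu$-large with respect to $A$. For $0\le i\le k$ let $A^i_U=\{\tau\in A:|\tau\cap U|=i\}$. If $\frac{w(A)}{w(E)}\le\frac{4\mu^2}{s^3(s-1)^2}$, then $$\frac{s(s-1)(k-1)}{2\mu}\lambda_{\operatorname{gr}}+\frac{s^3(s-1)^2}{4\mu^2}\frac{w(A)}{w(E)}\ge\left(1-\frac{s(s-1)(k-1)}{2\mu}\lambda_{\operatorname{gr}}\right)\sum_{i=2}^k(i-1)\frac{w(A^i_U)}{w(A)}.$$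
   Context: Let $s,k,K$ be positive integers. An $(s,k,K)$-two layer system is a triple $X=(V,E,T)$ where: $V$ is a finite set; $E\subseteq 2^V$ with $|\tau|=k$ for all $\tau\in E$ and $\bigcup_{\tau\in E}\tau=V$; $T\subseteq 2^E$ with $|\sigma|=K$ for all $\sigma\in T$ and $\bigcup_{\sigma\in T}\sigma=E$. Write $v\in\sigma$ if $v\in\tau$ for some $\tau\in\sigma$; it is required that $2\le|\{\tau\in\sigma:v\in\tau\}|\le s$ for all $\sigma\in T$, $v\in\sigma$ (so $s\ge2$). A positive $w:T\to\mathbb{R}_{>0}$ is fixed and extended by $w(\tau)=\sum_{\sigma\ni\tau}w(\sigma)$ ($\tau\in E$), $w(v)=\sum_{\sigma\in T,v\in\sigma}w(\sigma)$, $w(B)=\sum_{\eta\in B}w(\eta)$. For $v\in V$, $E_v=\{\tau\in E:v\in\tau\}$; the link of $v$ is the graph on $E_v$ where distinct $\tau_1,\tau_2$ are adjacent iff some $\sigma\in T$ contains both, with weight $m_v(\{\tau_1,\tau_2\})=\sum_{\sigma\in T,\tau_1,\tau_2\in\sigma}w(\sigma)$; $m_v(\tau)$ is the sum of weights of link edges at $\tau$, $m_v(B)=\sum_{\tau\in B}m_v(\tau)$. For $A\subseteq E$, $A_v=A\cap E_v$, and $v$ is $\mu$-large w.r.t. $A$ if $m_v(A_v)/m_v(E_v)\ge\mu$. The ground graph of $X$ has vertex set $V$, distinct $u,v$ adjacent iff some $\tau\in E$ contains both, with weight $m_{\operatorname{gr}}(\{u,v\})=\sum_{\tau\in E,u,v\in\tau}w(\tau)$.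 For a weighted graph $(V,E,m)$: $m(v)=\sum_{e\ni v}m(e)$, $m(U)=\sum_{v\in U}m(v)$, $m(U_1,U_2)=\sum_{(u_1,u_2)\in U_1\times U_2,\{u_1,u_2\}\in E}m(\{u_1,u_2\})$, $h_G=\min_{\emptyset\ne U\subsetneq V}\frac{m(U,V\setminus U)m(V)}{m(U)m(V\setminus U)}$; $G$ is a $\lambda$-expander if $1-h_G\le\lambda$. *)

theory Defs
  imports Complex_Main
begin

text \<open>A weighted graph is given by a finite vertex set VG and a weight function mw on pairs
  of vertices; mw u v is the weight of the edge {u,v} (and 0 if it is not an edge).\<close>

definition gvert_weight :: "'a set \<Rightarrow> ('a \<Rightarrow> 'a \<Rightarrow> real) \<Rightarrow> 'a \<Rightarrow> real" where
  "gvert_weight VG mw v = (\<Sum>u\<in>VG - {v}. mw v u)"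

definition gset_weight :: "'a set \<Rightarrow> ('a \<Rightarrow> 'a \<Rightarrow> real) \<Rightarrow> 'a set \<Rightarrow> real" where
  "gset_weight VG mw U = (\<Sum>v\<in>U. gvert_weight VG mw v)"

definition gcut_weight :: "('a \<Rightarrow> 'a \<Rightarrow> real) \<Rightarrow> 'a set \<Rightarrow> 'a set \<Rightarrow> real" where
  "gcut_weight mw U1 U2 = (\<Sum>p\<in>{p \<in> U1 \<times> U2. fst p \<noteq> snd p}. mw (fst p) (snd p))"

definition h_graph :: "'a set \<Rightarrow> ('a \<Rightarrow> 'a \<Rightarrow> real) \<Rightarrow> real" where
  "h_graph VG mw = Min ((\<lambda>U. gcut_weight mw U (VG - U) * gset_weight VG mw VG
        / (gset_weight VG mw U * gset_weight VG mw (VG - U))) ` {U. U \<noteq> {} \<and> U \<subset> VG})"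

definition is_expander :: "real \<Rightarrow> 'a set \<Rightarrow> ('a \<Rightarrow> 'a \<Rightarrow> real) \<Rightarrow> bool" where
  "is_expander lam VG mw \<longleftrightarrow> 1 - h_graph VG mw \<le> lam"

definition two_layer_system ::
  "nat \<Rightarrow> nat \<Rightarrow> nat \<Rightarrow> 'v set \<Rightarrow> 'v set set \<Rightarrow> 'v set set set \<Rightarrow> bool" where
  "two_layer_system s k K V E T \<longleftrightarrow>
     0 < s \<and> 0 < k \<and> 0 < K \<and> finite V \<and>
     E \<subseteq> Pow V \<and> (\<forall>\<tau>\<in>E. card \<tau> = k) \<and> \<Union>E = V \<and>
     T \<subseteq> Pow E \<and> (\<forall>\<sigma>\<in>T. card \<sigma> = K) \<and> \<Union>T = E \<and>
     (\<forall>\<sigma>\<in>T. \<forall>v\<in>\<Union>\<sigma>. 2 \<le> card {\<tau>\<in>\<sigma>. v \<in> \<tau>} \<and> card {\<tau>\<in>\<sigma>. v \<in> \<tau>} \<le> s)"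

text \<open>Weights: w is given on T; w(tau) and w(v) are induced.
  Note v \<in> sigma in the paper means v \<in> \<Union>sigma.\<close>

definition wE :: "'v set set set \<Rightarrow> ('v set set \<Rightarrow> real) \<Rightarrow> 'v set \<Rightarrow> real" where
  "wE T w \<tau> = (\<Sum>\<sigma>\<in>{\<sigma>\<in>T. \<tau> \<in> \<sigma>}. w \<sigma>)"

definition wEs :: "'v set set set \<Rightarrow> ('v set set \<Rightarrow> real) \<Rightarrow> 'v set set \<Rightarrow> real" where
  "wEs T w B = (\<Sum>\<tau>\<in>B. wE T w \<tau>)"

definition Ev :: "'v set set \<Rightarrow> 'v \<Rightarrow> 'v set set" where
  "Ev E v = {\<tau>\<in>E. v \<in> \<tau>}"

definition link_edge_weight ::
  "'v set set set \<Rightarrow> ('v set set \<Rightarrow> real) \<Rightarrow> 'v set \<Rightarrow> 'v set \<Rightarrow> real" where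
  "link_edge_weight T w \<tau>1 \<tau>2 = (\<Sum>\<sigma>\<in>{\<sigma>\<in>T. \<tau>1 \<in> \<sigma> \<and> \<tau>2 \<in> \<sigma>}. w \<sigma>)"

definition link_weight ::
  "'v set set \<Rightarrow> 'v set set set \<Rightarrow> ('v set set \<Rightarrow> real) \<Rightarrow> 'v \<Rightarrow> 'v set set \<Rightarrow> real" where
  "link_weight E T w v B = gset_weight (Ev E v) (link_edge_weight T w) B"

definition mu_large ::
  "'v set set \<Rightarrow> 'v set set set \<Rightarrow> ('v set set \<Rightarrow> real) \<Rightarrow> real \<Rightarrow> 'v set set \<Rightarrow> 'v \<Rightarrow> bool" where
  "mu_large E T w \<mu> A v \<longleftrightarrow>
     link_weight E T w v (A \<inter> Ev E v) / link_weight E T w v (Ev E v) \<ge> \<mu>"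

definition ground_weight ::
  "'v set set \<Rightarrow> 'v set set set \<Rightarrow> ('v set set \<Rightarrow> real) \<Rightarrow> 'v \<Rightarrow> 'v \<Rightarrow> real" where
  "ground_weight E T w u v = (\<Sum>\<tau>\<in>{\<tau>\<in>E. u \<in> \<tau> \<and> v \<in> \<tau>}. wE T w \<tau>)"

end

theory Submission
  imports Defs
begin

lemma cheb:
  fixes w f g :: "'a \<Rightarrow> real"
  assumes "finite A" "\<forall>a\<in>A. w a \<ge> 0" "\<forall>a\<in>A. \<forall>b\<in>A. (f a - f b) * (g a - g b) \<ge> 0"
  shows "(\<Sum>a\<in>A. w a * f a) * (\<Sum>a\<in>A. w a * g a) \<le> (\<Sum>a\<in>A. w a) * (\<Sum>a\<in>A. w a * (f a * g a))"
proof -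
  define X where "X = (\<Sum>a\<in>A. w a * (f a * g a))"
  define Y where "Y = (\<Sum>a\<in>A. w a)"
  define F where "F = (\<Sum>a\<in>A. w a * f a)"
  define G where "G = (\<Sum>a\<in>A. w a * g a)"
  have "0 \<le> (\<Sum>a\<in>A. \<Sum>b\<in>A. w a * w b * ((f a - f b) * (g a - g b)))"
    using assms by (intro sum_nonneg) (simp add: mult_nonneg_nonneg)
  also have "\<dots> = (\<Sum>a\<in>A. \<Sum>b\<in>A. (w a * (f a * g a)) * w b + w a * (w b * (f b * g b))
        - (w a * f a) * (w b * g b) - (w a * g a) * (w b * f b))"
    by (intro sum.cong refl) (simp add: algebra_simps)
  also have "\<dots> = (\<Sum>a\<in>A. (w a * (f a * g a)) * Y + w a * X - (w a * f a) * G - (w a * g a) * F)"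
    unfolding X_def Y_def F_def G_def
    by (intro sum.cong refl) (simp add: sum_subtractf sum.distrib sum_distrib_left[symmetric] sum_distrib_right[symmetric])
  also have "\<dots> = (\<Sum>a\<in>A. (w a * (f a * g a))) * Y + (\<Sum>a\<in>A. w a) * X - (\<Sum>a\<in>A. w a * f a) * G - (\<Sum>a\<in>A. w a * g a) * F"
    by (simp add: sum_subtractf sum.distrib sum_distrib_right)
  also have "\<dots> = X * Y + Y * X - F * G - G * F"
    unfolding X_def[symmetric] Y_def[symmetric] F_def[symmetric] G_def[symmetric] by simp
  finally show ?thesis unfolding X_def[symmetric] Y_def[symmetric] F_def[symmetric] G_def[symmetric]
    by (simp add: algebra_simps)
qed


lemma tls_finite:
  assumes "two_layer_system s k K V E T"
  shows "finite V" "finite E" "finite T" "\<And>\<tau>. \<tau> \<in> E \<Longrightarrow> finite \<tau>" "\<And>\<sigma>. \<sigma> \<in> T \<Longrightarrow> finite \<sigma>"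
proof -
  have V: "finite V" and EV: "E \<subseteq> Pow V" and TE: "T \<subseteq> Pow E" using assms unfolding two_layer_system_def by auto
  show "finite V" by fact
  show fE: "finite E" by (rule finite_subset[OF EV]) (simp add: V)
  show "finite T" by (rule finite_subset[OF TE]) (simp add: fE)
  show "\<And>\<tau>. \<tau> \<in> E \<Longrightarrow> finite \<tau>" using V EV finite_subset by blast
  show "\<And>\<sigma>. \<sigma> \<in> T \<Longrightarrow> finite \<sigma>" using fE TE finite_subset by blast
qed

lemma wE_nonneg: "\<forall>\<sigma>\<in>T. w \<sigma> > 0 \<Longrightarrow> wE T w \<tau> \<ge> 0"
  unfolding wE_def by (intro sum_nonneg) auto

lemma wE_pos:
  assumes "two_layer_system s k K V E T" "\<forall>\<sigma>\<in>T. w \<sigma> > 0" "\<tau> \<in> E"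
  shows "wE T w \<tau> > 0"
proof -
  have "\<Union>T = E" using assms(1) unfolding two_layer_system_def by auto
  then obtain \<sigma> where s: "\<sigma> \<in> T" "\<tau> \<in> \<sigma>" using assms(3) by auto
  have fT: "finite T" using tls_finite[OF assms(1)] by auto
  have "w \<sigma> \<le> wE T w \<tau>" unfolding wE_def
    using s fT assms(2) by (intro member_le_sum) auto
  thus ?thesis using s assms(2) by force
qed

lemma link_bounds:
  assumes X: "two_layer_system s k K V E T" and wpos: "\<forall>\<sigma>\<in>T. w \<sigma> > 0" and t: "\<tau> \<in> Ev E v"
  shows "wE T w \<tau> \<le> gvert_weight (Ev E v) (link_edge_weight T w) \<tau>"
        "gvert_weight (Ev E v) (link_edge_weight T w) \<tau> \<le> (real s - 1) * wE T w \<tau>"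
proof -
  note fin = tls_finite[OF X]
  have fEv: "finite (Ev E v)" using fin(2) unfolding Ev_def by auto
  have TE: "T \<subseteq> Pow E" and cs: "\<forall>\<sigma>\<in>T. \<forall>v\<in>\<Union>\<sigma>. 2 \<le> card {\<tau>\<in>\<sigma>. v \<in> \<tau>} \<and> card {\<tau>\<in>\<sigma>. v \<in> \<tau>} \<le> s"
    using X unfolding two_layer_system_def by auto
  define c where "c \<sigma> = card {\<tau>' \<in> Ev E v - {\<tau>}. \<tau> \<in> \<sigma> \<and> \<tau>' \<in> \<sigma>}" for \<sigma>
  have gv: "gvert_weight (Ev E v) (link_edge_weight T w) \<tau> = (\<Sum>\<sigma>\<in>T. w \<sigma> * real (c \<sigma>))"
  proof -
    have "gvert_weight (Ev E v) (link_edge_weight T w) \<tau> =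
          (\<Sum>\<tau>'\<in>Ev E v - {\<tau>}. \<Sum>\<sigma>\<in>{\<sigma>\<in>T. \<tau> \<in> \<sigma> \<and> \<tau>' \<in> \<sigma>}. w \<sigma>)"
      unfolding gvert_weight_def link_edge_weight_def by simp
    also have "\<dots> = (\<Sum>\<sigma>\<in>T. \<Sum>\<tau>'\<in>{\<tau>' \<in> Ev E v - {\<tau>}. \<tau> \<in> \<sigma> \<and> \<tau>' \<in> \<sigma>}. w \<sigma>)"
      using fEv fin(3) by (intro sum.swap_restrict) auto
    also have "\<dots> = (\<Sum>\<sigma>\<in>T. w \<sigma> * real (c \<sigma>))" unfolding c_def by (simp add: mult.commute)
    finally show ?thesis .
  qed
  have wEe: "wE T w \<tau> = (\<Sum>\<sigma>\<in>T. if \<tau> \<in> \<sigma> then w \<sigma> else 0)"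
    unfolding wE_def using fin(3) by (simp add: sum.inter_filter)
  have cb: "(if \<tau> \<in> \<sigma> then 1 else 0) \<le> c \<sigma> \<and> real (c \<sigma>) \<le> (if \<tau> \<in> \<sigma> then real s - 1 else 0)" if sT: "\<sigma> \<in> T" for \<sigma>
  proof (cases "\<tau> \<in> \<sigma>")
    case False thus ?thesis unfolding c_def by simp
  next
    case True
    define C where "C = {\<tau>'\<in>\<sigma>. v \<in> \<tau>'}"
    have vs: "v \<in> \<Union>\<sigma>" using t True unfolding Ev_def by auto
    have C2: "2 \<le> card C" "card C \<le> s" using cs sT vs unfolding C_def by auto
    have fC: "finite C" using fin(5)[OF sT] unfolding C_def by auto
    have tC: "\<tau> \<in> C" using True t unfolding C_def Ev_def by auto
    have "{\<tau>' \<in> Ev E v - {\<tau>}. \<tau> \<in> \<sigma> \<and> \<tau>' \<in> \<sigma>} = C - {\<tau>}"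
      using True sT TE unfolding C_def Ev_def by auto
    hence "c \<sigma> = card C - 1" unfolding c_def using fC tC by simp
    thus ?thesis using C2 True by auto
  qed
  show "wE T w \<tau> \<le> gvert_weight (Ev E v) (link_edge_weight T w) \<tau>"
    unfolding gv wEe
  proof (intro sum_mono)
    fix \<sigma> assume sT: "\<sigma> \<in> T"
    have "(if \<tau> \<in> \<sigma> then 1 else 0) \<le> real (c \<sigma>)" using cb[OF sT] by (auto split: if_splits)
    hence "w \<sigma> * (if \<tau> \<in> \<sigma> then 1 else 0) \<le> w \<sigma> * real (c \<sigma>)"
      using wpos sT by (intro mult_left_mono) auto
    thus "(if \<tau> \<in> \<sigma> then w \<sigma> else 0) \<le> w \<sigma> * real (c \<sigma>)" by (auto split: if_splits)
  qed
  show "gvert_weight (Ev E v) (link_edge_weight T w) \<tau> \<le> (real s - 1) * wE T w \<tau>"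
    unfolding gv wEe sum_distrib_left
  proof (intro sum_mono)
    fix \<sigma> assume sT: "\<sigma> \<in> T"
    have "w \<sigma> * real (c \<sigma>) \<le> w \<sigma> * (if \<tau> \<in> \<sigma> then real s - 1 else 0)"
      using cb[OF sT] wpos sT by (intro mult_left_mono) auto
    thus "w \<sigma> * real (c \<sigma>) \<le> (real s - 1) * (if \<tau> \<in> \<sigma> then w \<sigma> else 0)" by (auto simp: mult.commute split: if_splits)
  qed
qed

lemma swapU:
  fixes g :: "'v set \<Rightarrow> real"
  assumes "finite U" "finite E"
  shows "(\<Sum>v\<in>U. \<Sum>\<tau>\<in>Ev E v. g \<tau>) = (\<Sum>\<tau>\<in>E. real (card (\<tau> \<inter> U)) * g \<tau>)"
proof -
  have "(\<Sum>v\<in>U. \<Sum>\<tau>\<in>Ev E v. g \<tau>) = (\<Sum>v\<in>U. \<Sum>\<tau>\<in>{\<tau>\<in>E. v \<in> \<tau>}. g \<tau>)" unfolding Ev_def by simp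
  also have "\<dots> = (\<Sum>\<tau>\<in>E. \<Sum>v\<in>{v\<in>U. v \<in> \<tau>}. g \<tau>)" using sum.swap_restrict[OF assms, of "\<lambda>v \<tau>. g \<tau>" "\<lambda>v \<tau>. v \<in> \<tau>"] by simp
  also have "\<dots> = (\<Sum>\<tau>\<in>E. real (card (\<tau> \<inter> U)) * g \<tau>)"
  proof (intro sum.cong refl)
    fix \<tau> have "{v\<in>U. v \<in> \<tau>} = \<tau> \<inter> U" by auto
    thus "(\<Sum>v\<in>{v\<in>U. v \<in> \<tau>}. g \<tau>) = real (card (\<tau> \<inter> U)) * g \<tau>" by simp
  qed
  finally show ?thesis .
qed



lemma ground_vert:
  assumes fE: "finite E" and fV: "finite V" and EV: "E \<subseteq> Pow V" and ck: "\<forall>\<tau>\<in>E. card \<tau> = k"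
  shows "gvert_weight V (ground_weight E T w) v = (real k - 1) * (\<Sum>\<tau>\<in>Ev E v. wE T w \<tau>)"
proof -
  have "gvert_weight V (ground_weight E T w) v = (\<Sum>u\<in>V - {v}. \<Sum>\<tau>\<in>{\<tau>\<in>E. v \<in> \<tau> \<and> u \<in> \<tau>}. wE T w \<tau>)"
    unfolding gvert_weight_def ground_weight_def by simp
  also have "\<dots> = (\<Sum>\<tau>\<in>E. \<Sum>u\<in>{u\<in>V - {v}. v \<in> \<tau> \<and> u \<in> \<tau>}. wE T w \<tau>)"
    using sum.swap_restrict[of "V - {v}" E "\<lambda>u \<tau>. wE T w \<tau>" "\<lambda>u \<tau>. v \<in> \<tau> \<and> u \<in> \<tau>"] fE fV by simp
  also have "\<dots> = (\<Sum>\<tau>\<in>E. if v \<in> \<tau> then (real k - 1) * wE T w \<tau> else 0)"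
  proof (intro sum.cong refl)
    fix \<tau> assume t: "\<tau> \<in> E"
    have ft: "finite \<tau>" using t EV fV finite_subset by blast
    show "(\<Sum>u\<in>{u\<in>V - {v}. v \<in> \<tau> \<and> u \<in> \<tau>}. wE T w \<tau>) = (if v \<in> \<tau> then (real k - 1) * wE T w \<tau> else 0)"
    proof (cases "v \<in> \<tau>")
      case True
      have "{u\<in>V - {v}. v \<in> \<tau> \<and> u \<in> \<tau>} = \<tau> - {v}" using True t EV by auto
      moreover have "card (\<tau> - {v}) = k - 1" using True ft ck t by simp
      moreover have "k \<ge> 1" using True ft ck t by (metis card_0_eq empty_iff less_one not_le)
      ultimately show ?thesis using True by (simp add: of_nat_diff)
    qed simp
  qed
  also have "\<dots> = (real k - 1) * (\<Sum>\<tau>\<in>Ev E v. wE T w \<tau>)"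
    unfolding Ev_def using fE by (simp add: sum.inter_filter sum_distrib_left) (intro sum.cong refl, simp)
  finally show ?thesis .
qed

lemma gcut_split:
  assumes "finite V" "U \<subseteq> V"
  shows "gset_weight V mw U = gcut_weight mw U U + gcut_weight mw U (V - U)"
proof -
  have fU: "finite U" using assms finite_subset by blast
  have "gset_weight V mw U = (\<Sum>p\<in>Sigma U (\<lambda>v. V - {v}). mw (fst p) (snd p))"
    unfolding gset_weight_def gvert_weight_def using assms fU by (simp add: sum.Sigma split_def)
  also have "Sigma U (\<lambda>v. V - {v}) = {p \<in> U \<times> U. fst p \<noteq> snd p} \<union> {p \<in> U \<times> (V - U). fst p \<noteq> snd p}"
    using assms by auto
  also have "(\<Sum>p\<in>\<dots>. mw (fst p) (snd p)) = gcut_weight mw U U + gcut_weight mw U (V - U)"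
    unfolding gcut_weight_def using assms fU by (intro sum.union_disjoint) auto
  finally show ?thesis .
qed

lemma card_offdiag:
  assumes "finite B"
  shows "card {p \<in> B \<times> B. fst p \<noteq> snd p} = card B * card B - card B"
proof -
  have "B \<times> B = {p \<in> B \<times> B. fst p \<noteq> snd p} \<union> (\<lambda>x. (x, x)) ` B" by auto
  moreover have "card ((\<lambda>x. (x, x)) ` B) = card B" by (intro card_image) (auto simp: inj_on_def)
  moreover have "card ({p \<in> B \<times> B. fst p \<noteq> snd p} \<union> (\<lambda>x. (x, x)) ` B) = card {p \<in> B \<times> B. fst p \<noteq> snd p} + card ((\<lambda>x. (x, x)) ` B)"
    using assms by (intro card_Un_disjoint) auto
  ultimately have "card (B \<times> B) = card {p \<in> B \<times> B. fst p \<noteq> snd p} + card B"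
    by simp
  hence "card B * card B = card {p \<in> B \<times> B. fst p \<noteq> snd p} + card B"
    by (simp add: card_cartesian_product)
  thus ?thesis by simp
qed

lemma gcut_UU:
  assumes fE: "finite E" and fV: "finite V" and UV: "U \<subseteq> V"
  shows "gcut_weight (ground_weight E T w) U U =
          (\<Sum>\<tau>\<in>E. wE T w \<tau> * (real (card (\<tau> \<inter> U)) * (real (card (\<tau> \<inter> U)) - 1)))"
proof -
  have fU: "finite U" using fV UV finite_subset by blast
  define P where "P = {p \<in> U \<times> U. fst p \<noteq> snd p}"
  have fP: "finite P" unfolding P_def using fU by auto
  have "gcut_weight (ground_weight E T w) U U = (\<Sum>p\<in>P. \<Sum>\<tau>\<in>{\<tau>\<in>E. fst p \<in> \<tau> \<and> snd p \<in> \<tau>}. wE T w \<tau>)"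
    unfolding gcut_weight_def ground_weight_def P_def by simp
  also have "\<dots> = (\<Sum>\<tau>\<in>E. \<Sum>p\<in>{p\<in>P. fst p \<in> \<tau> \<and> snd p \<in> \<tau>}. wE T w \<tau>)"
    using sum.swap_restrict[of P E "\<lambda>p \<tau>. wE T w \<tau>" "\<lambda>p \<tau>. fst p \<in> \<tau> \<and> snd p \<in> \<tau>"] fE fP by simp
  also have "\<dots> = (\<Sum>\<tau>\<in>E. wE T w \<tau> * (real (card (\<tau> \<inter> U)) * (real (card (\<tau> \<inter> U)) - 1)))"
  proof (intro sum.cong refl)
    fix \<tau>
    have "{p\<in>P. fst p \<in> \<tau> \<and> snd p \<in> \<tau>} = {p \<in> (\<tau> \<inter> U) \<times> (\<tau> \<inter> U). fst p \<noteq> snd p}"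
      unfolding P_def by auto
    moreover have "card {p \<in> (\<tau> \<inter> U) \<times> (\<tau> \<inter> U). fst p \<noteq> snd p} = card (\<tau> \<inter> U) * card (\<tau> \<inter> U) - card (\<tau> \<inter> U)"
      using fU by (intro card_offdiag) auto
    moreover have "real (card (\<tau> \<inter> U) * card (\<tau> \<inter> U) - card (\<tau> \<inter> U)) = real (card (\<tau> \<inter> U)) * (real (card (\<tau> \<inter> U)) - 1)"
      by (cases "card (\<tau> \<inter> U)") (auto simp: of_nat_diff algebra_simps)
    ultimately show "(\<Sum>p\<in>{p\<in>P. fst p \<in> \<tau> \<and> snd p \<in> \<tau>}. wE T w \<tau>) = wE T w \<tau> * (real (card (\<tau> \<inter> U)) * (real (card (\<tau> \<inter> U)) - 1))"
      by (simp add: mult.commute)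
  qed
  finally show ?thesis .
qed


lemma expander_cut:
  assumes fV: "finite VG" and UV: "U \<subseteq> VG" "U \<noteq> {}" "U \<noteq> VG"
    and p1: "gset_weight VG mw U > 0" and p2: "gset_weight VG mw (VG - U) > 0"
    and ex: "is_expander lam VG mw"
  shows "(1 - lam) * (gset_weight VG mw U * gset_weight VG mw (VG - U)) \<le> gcut_weight mw U (VG - U) * gset_weight VG mw VG"
proof -
  define f where "f U = gcut_weight mw U (VG - U) * gset_weight VG mw VG / (gset_weight VG mw U * gset_weight VG mw (VG - U))" for U
  have fin: "finite {U. U \<noteq> {} \<and> U \<subset> VG}" 
  proof (rule finite_subset)
    show "{U. U \<noteq> {} \<and> U \<subset> VG} \<subseteq> Pow VG" by auto
    show "finite (Pow VG)" using fV by simp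
  qed
  have US: "U \<in> {U. U \<noteq> {} \<and> U \<subset> VG}" using UV by auto
  have "h_graph VG mw = Min (f ` {U. U \<noteq> {} \<and> U \<subset> VG})" unfolding h_graph_def f_def by simp
  also have "\<dots> \<le> f U" by (rule Min_le[OF finite_imageI[OF fin] imageI[OF US]])
  finally have "h_graph VG mw \<le> f U" .
  moreover have "1 - lam \<le> h_graph VG mw" using ex unfolding is_expander_def by simp
  ultimately have "1 - lam \<le> f U" by simp
  moreover have "0 < gset_weight VG mw U * gset_weight VG mw (VG - U)" using p1 p2 by simp
  ultimately show ?thesis unfolding f_def by (simp only: pos_le_divide_eq)
qed



theorem lemma4p9:
  fixes s k K :: nat and V :: "'v set" and E :: "'v set set" and T :: "'v set set set"
    and w :: "'v set set \<Rightarrow> real" and lam \<mu> :: real and A :: "'v set set" and U :: "'v set"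
  assumes X: "two_layer_system s k K V E T"
    and wpos: "\<forall>\<sigma>\<in>T. w \<sigma> > 0"
    and lam: "lam \<ge> 0"
    and exp: "is_expander lam V (ground_weight E T w)"
    and A: "A \<subseteq> E" "A \<noteq> {}"
    and mu: "0 < \<mu>" "\<mu> < 1"
    and U: "U \<subseteq> V" "\<forall>v\<in>U. mu_large E T w \<mu> A v"
    and small: "wEs T w A / wEs T w E \<le> 4 * \<mu>^2 / (real s ^ 3 * (real s - 1)^2)"
  shows "real s * (real s - 1) * (real k - 1) / (2 * \<mu>) * lam
           + real s ^ 3 * (real s - 1)^2 / (4 * \<mu>^2) * (wEs T w A / wEs T w E)
         \<ge> (1 - real s * (real s - 1) * (real k - 1) / (2 * \<mu>) * lam) *
           (\<Sum>i=2..k. (real i - 1) * (wEs T w {\<tau>\<in>A. card (\<tau> \<inter> U) = i} / wEs T w A))"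
proof -
  note fin = tls_finite[OF X]
  have Xd: "0 < s" "0 < k" "E \<subseteq> Pow V" "\<forall>\<tau>\<in>E. card \<tau> = k" "\<Union>E = V" "T \<subseteq> Pow E" "\<Union>T = E"
    "\<forall>\<sigma>\<in>T. \<forall>v\<in>\<Union>\<sigma>. 2 \<le> card {\<tau>\<in>\<sigma>. v \<in> \<tau>} \<and> card {\<tau>\<in>\<sigma>. v \<in> \<tau>} \<le> s"
    using X unfolding two_layer_system_def by auto
  define W where "W = wEs T w E"
  define WA where "WA = wEs T w A"
  define j where "j \<tau> = card (\<tau> \<inter> U)" for \<tau>
  define fj where "fj \<tau> = (if 2 \<le> j \<tau> then real (j \<tau>) - 1 else 0)" for \<tau>
  define S where "S = (\<Sum>\<tau>\<in>A. wE T w \<tau> * fj \<tau>)"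
  define S1 where "S1 = (\<Sum>\<tau>\<in>A. wE T w \<tau> * real (j \<tau>))"
  define S2 where "S2 = (\<Sum>\<tau>\<in>A. wE T w \<tau> * (fj \<tau> * real (j \<tau>)))"
  define P where "P = (\<Sum>\<tau>\<in>E. wE T w \<tau> * real (j \<tau>))"
  define c where "c = real s * (real s - 1) * (real k - 1) / (2 * \<mu>)"
  define \<alpha> where "\<alpha> = WA / W"
  have fA: "finite A" using A fin(2) finite_subset by blast
  have fU: "finite U" using U fin(1) finite_subset by blast
  have wEnn: "\<And>\<tau>. wE T w \<tau> \<ge> 0" using wE_nonneg wpos by blast
  have wEp: "\<And>\<tau>. \<tau> \<in> E \<Longrightarrow> wE T w \<tau> > 0" using wE_pos[OF X wpos] by blast
  obtain \<tau>0 where t0: "\<tau>0 \<in> A" using A by auto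
  have WAp: "WA > 0"
  proof -
    have "wE T w \<tau>0 \<le> WA" unfolding WA_def wEs_def using fA t0 wEnn by (intro member_le_sum) auto
    thus ?thesis using wEp[of \<tau>0] t0 A by auto
  qed
  have WAW: "WA \<le> W" unfolding WA_def W_def wEs_def using A fin(2) wEnn by (intro sum_mono2) auto
  have Wp: "W > 0" using WAp WAW by simp
  have s2: "s \<ge> 2"
  proof -
    have tE: "\<tau>0 \<in> E" using t0 A by auto
    then obtain \<sigma> where sg: "\<sigma> \<in> T" "\<tau>0 \<in> \<sigma>" using Xd(7) by auto
    have "card \<tau>0 = k" using Xd(4) tE by auto
    hence "\<tau>0 \<noteq> {}" using Xd(2) by auto
    then obtain v where "v \<in> \<tau>0" by auto
    hence "v \<in> \<Union>\<sigma>" using sg by auto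
    hence "2 \<le> card {\<tau>\<in>\<sigma>. v \<in> \<tau>} \<and> card {\<tau>\<in>\<sigma>. v \<in> \<tau>} \<le> s" using Xd(8) sg(1) by blast
    thus ?thesis by linarith
  qed
  have jk: "j \<tau> \<le> k" if "\<tau> \<in> E" for \<tau>
  proof -
    have "finite \<tau>" using fin(4) that by auto
    hence "card (\<tau> \<inter> U) \<le> card \<tau>" by (intro card_mono) auto
    thus ?thesis using Xd(4) that unfolding j_def by auto
  qed
  have sumconv: "(\<Sum>i=2..k. (real i - 1) * (wEs T w {\<tau>\<in>A. card (\<tau> \<inter> U) = i} / wEs T w A)) = S / WA"
  proof -
    have "(\<Sum>i=2..k. (real i - 1) * (wEs T w {\<tau>\<in>A. card (\<tau> \<inter> U) = i} / wEs T w A))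
        = (\<Sum>i=2..k. \<Sum>\<tau>\<in>{\<tau>\<in>A. j \<tau> = i}. (real i - 1) * wE T w \<tau>) / WA"
      unfolding WA_def wEs_def j_def by (simp add: sum_divide_distrib sum_distrib_left)
    also have "(\<Sum>i=2..k. \<Sum>\<tau>\<in>{\<tau>\<in>A. j \<tau> = i}. (real i - 1) * wE T w \<tau>)
        = (\<Sum>\<tau>\<in>A. \<Sum>i\<in>{i\<in>{2..k}. j \<tau> = i}. (real i - 1) * wE T w \<tau>)"
      using sum.swap_restrict[of "{2..k}" A "\<lambda>i \<tau>. (real i - 1) * wE T w \<tau>" "\<lambda>i \<tau>. j \<tau> = i"] fA by simp
    also have "\<dots> = S" unfolding S_def
    proof (intro sum.cong refl)
      fix \<tau> assume tA: "\<tau> \<in> A"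
      have "j \<tau> \<le> k" using jk tA A by auto
      hence "{i\<in>{2..k}. j \<tau> = i} = (if 2 \<le> j \<tau> then {j \<tau>} else {})" by auto
      thus "(\<Sum>i\<in>{i\<in>{2..k}. j \<tau> = i}. (real i - 1) * wE T w \<tau>) = wE T w \<tau> * fj \<tau>"
        unfolding fj_def by (simp add: mult.commute)
    qed
    finally show ?thesis .
  qed
  have Snn: "S \<ge> 0" unfolding S_def fj_def using wEnn by (intro sum_nonneg mult_nonneg_nonneg) auto
  have LHSnn: "0 \<le> real s * (real s - 1) * (real k - 1) / (2 * \<mu>) * lam
           + real s ^ 3 * (real s - 1)^2 / (4 * \<mu>^2) * (wEs T w A / wEs T w E)"
    using Xd(1,2) mu lam WAp Wp unfolding WA_def[symmetric] W_def[symmetric]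
    by (intro add_nonneg_nonneg mult_nonneg_nonneg divide_nonneg_nonneg) auto
  show ?thesis
  proof (cases "k \<ge> 2")
    case False
    hence "k = 1" using Xd(2) by auto
    thus ?thesis using LHSnn by simp
  next
    case k2: True
    show ?thesis
    proof (cases "c * lam \<ge> 1")
      case True
      have "(1 - c * lam) * (S / WA) \<le> 0" using True Snn WAp by (intro mult_nonpos_nonneg) auto
      thus ?thesis using LHSnn unfolding sumconv c_def by linarith
    next
      case tl1: False
      define t where "t = c * lam"
      have c1: "c > 1"
      proof -
        have "real s * (real s - 1) * (real k - 1) \<ge> 2 * 1 * 1" using s2 k2
          by (intro mult_mono) (auto simp: of_nat_le_iff[symmetric])
        hence "2 / (2 * \<mu>) \<le> real s * (real s - 1) * (real k - 1) / (2 * \<mu>)" using mu by (intro divide_right_mono) auto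
        hence "c \<ge> 1 / \<mu>" unfolding c_def by simp
        moreover have "1 / \<mu> > 1" using mu by simp
        ultimately show ?thesis by simp
      qed
      have lam1: "lam < 1"
      proof -
        have "lam * 1 \<le> lam * c" using c1 lam by (intro mult_left_mono) auto
        thus ?thesis using tl1 by (simp add: mult.commute)
      qed
      have lamt: "lam \<le> t" unfolding t_def using c1 lam by (metis mult.commute mult_left_mono less_imp_le mult.right_neutral)
      have t01: "0 \<le> t" "t < 1" unfolding t_def using tl1 c1 lam by auto
      have Ev_ne: "Ev E v \<noteq> {}" if "v \<in> V" for v
        using that Xd(5) unfolding Ev_def by auto
      have fEv: "finite (Ev E v)" for v using fin(2) unfolding Ev_def by auto
      have AEv: "A \<inter> Ev E v = Ev A v" for v using A unfolding Ev_def by auto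
      have vbound: "\<mu> * (\<Sum>\<tau>\<in>Ev E v. wE T w \<tau>) \<le> (real s - 1) * (\<Sum>\<tau>\<in>Ev A v. wE T w \<tau>)" if vU: "v \<in> U" for v
      proof -
        define m where "m B = link_weight E T w v B" for B
        have mdef: "m B = (\<Sum>\<tau>\<in>B. gvert_weight (Ev E v) (link_edge_weight T w) \<tau>)" for B
          unfolding m_def link_weight_def gset_weight_def by simp
        have vV: "v \<in> V" using vU U by auto
        have lo: "(\<Sum>\<tau>\<in>Ev E v. wE T w \<tau>) \<le> m (Ev E v)" unfolding mdef
          using link_bounds(1)[OF X wpos] by (intro sum_mono) auto
        have "(\<Sum>\<tau>\<in>Ev E v. wE T w \<tau>) > 0"
        proof -
          obtain \<tau> where "\<tau> \<in> Ev E v" using Ev_ne[OF vV] by auto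
          moreover have "wE T w \<tau> \<le> (\<Sum>\<tau>\<in>Ev E v. wE T w \<tau>)"
            using calculation fEv wEnn by (intro member_le_sum) auto
          moreover have "\<tau> \<in> E" using calculation unfolding Ev_def by auto
          ultimately show ?thesis using wEp by fastforce
        qed
        hence mpos: "m (Ev E v) > 0" using lo by simp
        have "\<mu> \<le> m (A \<inter> Ev E v) / m (Ev E v)" using U(2) vU unfolding mu_large_def m_def by auto
        hence "\<mu> * m (Ev E v) \<le> m (A \<inter> Ev E v)" using mpos by (simp add: le_divide_eq)
        moreover have "m (A \<inter> Ev E v) \<le> (real s - 1) * (\<Sum>\<tau>\<in>A \<inter> Ev E v. wE T w \<tau>)"
          unfolding mdef sum_distrib_left using link_bounds(2)[OF X wpos] by (intro sum_mono) auto
        moreover have "\<mu> * (\<Sum>\<tau>\<in>Ev E v. wE T w \<tau>) \<le> \<mu> * m (Ev E v)" using lo mu by simp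
        ultimately show ?thesis using AEv by simp
      qed
      have PS1: "\<mu> * P \<le> (real s - 1) * S1"
      proof -
        have "\<mu> * P = \<mu> * (\<Sum>v\<in>U. \<Sum>\<tau>\<in>Ev E v. wE T w \<tau>)"
          unfolding P_def j_def using swapU[OF fU fin(2)] by (simp add: mult.commute)
        also have "\<dots> \<le> (\<Sum>v\<in>U. (real s - 1) * (\<Sum>\<tau>\<in>Ev A v. wE T w \<tau>))"
        proof -
          have "\<mu> * (\<Sum>v\<in>U. \<Sum>\<tau>\<in>Ev E v. wE T w \<tau>) = (\<Sum>v\<in>U. \<mu> * (\<Sum>\<tau>\<in>Ev E v. wE T w \<tau>))"
            by (rule sum_distrib_left)
          also have "\<dots> \<le> (\<Sum>v\<in>U. (real s - 1) * (\<Sum>\<tau>\<in>Ev A v. wE T w \<tau>))"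
            using vbound by (intro sum_mono) auto
          finally show ?thesis .
        qed
        also have "\<dots> = (real s - 1) * S1"
          unfolding S1_def j_def sum_distrib_left[symmetric] using swapU[OF fU fA] by (simp add: mult.commute)
        finally show ?thesis .
      qed
      define gw where "gw = ground_weight E T w"
      have gset: "gset_weight V gw U' = (real k - 1) * (\<Sum>\<tau>\<in>E. wE T w \<tau> * real (card (\<tau> \<inter> U')))" if "finite U'" for U'
      proof -
        have "gset_weight V gw U' = (\<Sum>v\<in>U'. (real k - 1) * (\<Sum>\<tau>\<in>Ev E v. wE T w \<tau>))"
          unfolding gset_weight_def gw_def using ground_vert[OF fin(2) fin(1) Xd(3) Xd(4)] by simp
        also have "\<dots> = (real k - 1) * (\<Sum>\<tau>\<in>E. wE T w \<tau> * real (card (\<tau> \<inter> U')))"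
          unfolding sum_distrib_left[symmetric] using swapU[OF that fin(2)] by (simp add: mult.commute)
        finally show ?thesis .
      qed
      define mU where "mU = gset_weight V gw U"
      define mV where "mV = gset_weight V gw V"
      have mUe: "mU = (real k - 1) * P" unfolding mU_def P_def j_def using gset[OF fU] by simp
      have mVe: "mV = (real k - 1) * (real k * W)"
      proof -
        have "(\<Sum>\<tau>\<in>E. wE T w \<tau> * real (card (\<tau> \<inter> V))) = (\<Sum>\<tau>\<in>E. real k * wE T w \<tau>)"
        proof (intro sum.cong refl)
          fix \<tau> assume "\<tau> \<in> E"
          hence "\<tau> \<inter> V = \<tau>" "card \<tau> = k" using Xd(3,4) by auto
          thus "wE T w \<tau> * real (card (\<tau> \<inter> V)) = real k * wE T w \<tau>" by simp
        qed
        thus ?thesis unfolding mV_def W_def wEs_def using gset[OF fin(1)] by (simp add: sum_distrib_left)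
      qed
      have Pnn: "P \<ge> 0" unfolding P_def using wEnn by (intro sum_nonneg) auto
      have S1nn: "S1 \<ge> 0" unfolding S1_def using wEnn by (intro sum_nonneg) auto
      have kk: "real k - 1 \<ge> 1" using k2 by simp
      have mVp: "mV > 0" unfolding mVe using Wp kk k2 by simp
      have gpos: "gset_weight V gw U' > 0" if U'V: "U' \<subseteq> V" and U'ne: "U' \<noteq> {}" for U'
      proof -
        have fU': "finite U'" using U'V fin(1) finite_subset by blast
        obtain v where v: "v \<in> U'" using U'ne by auto
        then obtain \<tau> where t: "\<tau> \<in> E" "v \<in> \<tau>" using U'V Xd(5) by blast
        have "card (\<tau> \<inter> U') \<ge> 1"
        proof -
          have "finite (\<tau> \<inter> U')" using fU' by auto
          moreover have "\<tau> \<inter> U' \<noteq> {}" using t v by auto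
          ultimately show ?thesis by (simp add: Suc_le_eq card_gt_0_iff)
        qed
        hence "wE T w \<tau> * 1 \<le> wE T w \<tau> * real (card (\<tau> \<inter> U'))" using wEnn by (intro mult_left_mono) auto
        moreover have "wE T w \<tau> * real (card (\<tau> \<inter> U')) \<le> (\<Sum>\<tau>\<in>E. wE T w \<tau> * real (card (\<tau> \<inter> U')))"
          using t fin(2) wEnn by (intro member_le_sum) auto
        ultimately have "(\<Sum>\<tau>\<in>E. wE T w \<tau> * real (card (\<tau> \<inter> U'))) > 0" using wEp[OF t(1)] by linarith
        thus ?thesis using gset[OF fU'] kk by simp
      qed
      define Q where "Q = gcut_weight gw U U"
      have S2Q: "S2 \<le> Q"
      proof -
        have "S2 = (\<Sum>\<tau>\<in>A. wE T w \<tau> * (real (card (\<tau> \<inter> U)) * (real (card (\<tau> \<inter> U)) - 1)))"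
          unfolding S2_def
        proof (intro sum.cong refl)
          fix \<tau>
          have "fj \<tau> * real (j \<tau>) = real (j \<tau>) * (real (j \<tau>) - 1)"
            unfolding fj_def by (cases "j \<tau> = 0 \<or> j \<tau> = 1") auto
          thus "wE T w \<tau> * (fj \<tau> * real (j \<tau>)) = wE T w \<tau> * (real (card (\<tau> \<inter> U)) * (real (card (\<tau> \<inter> U)) - 1))"
            unfolding j_def by simp
        qed
        also have "\<dots> \<le> (\<Sum>\<tau>\<in>E. wE T w \<tau> * (real (card (\<tau> \<inter> U)) * (real (card (\<tau> \<inter> U)) - 1)))"
        proof (intro sum_mono2 fin(2) A(1))
          fix \<tau>
          have "real (card (\<tau> \<inter> U)) * (real (card (\<tau> \<inter> U)) - 1) \<ge> 0"
            by (cases "card (\<tau> \<inter> U)") auto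
          thus "0 \<le> wE T w \<tau> * (real (card (\<tau> \<inter> U)) * (real (card (\<tau> \<inter> U)) - 1))"
            using wEnn by simp
        qed
        also have "\<dots> = Q" unfolding Q_def gw_def using gcut_UU[OF fin(2) fin(1) U(1)] by simp
        finally show ?thesis .
      qed
      have Qb: "Q * mV \<le> lam * mU * mV + (1 - lam) * mU * mU"
      proof -
        have split: "mU = Q + gcut_weight gw U (V - U)" unfolding mU_def Q_def using gcut_split[OF fin(1) U(1)] by simp
        have addV: "mV = mU + gset_weight V gw (V - U)"
          unfolding mV_def mU_def gset_weight_def using sum.subset_diff[OF U(1) fin(1)] by (simp add: add.commute)
        show ?thesis
        proof (cases "U = {}")
          case True
          hence "Q = 0" "mU = 0" unfolding Q_def mU_def gcut_weight_def gset_weight_def by auto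
          thus ?thesis by simp
        next
          case Une: False
          show ?thesis
          proof (cases "U = V")
            case True
            hence "gcut_weight gw U (V - U) = 0" unfolding gcut_weight_def by simp
            hence "Q = mU" "mV = mU" using split True unfolding mU_def mV_def by auto
            thus ?thesis by (simp add: algebra_simps)
          next
            case False
            have "(1 - lam) * (mU * gset_weight V gw (V - U)) \<le> gcut_weight gw U (V - U) * mV"
              unfolding mU_def mV_def gw_def
              using expander_cut[OF fin(1) U(1) Une False _ _ exp] gpos[OF U(1) Une] gpos[of "V - U"] U(1) False
              unfolding gw_def by auto
            hence "(1 - lam) * (mU * (mV - mU)) \<le> (mU - Q) * mV" using split addV by simp
            thus ?thesis by (simp add: algebra_simps)
          qed
        qed
      qed
      define L where "L = lam * (real k - 1) * (real s - 1) / \<mu>"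
      define \<gamma> where "\<gamma> = (real s - 1)^2 / \<mu>^2"
      have S2b: "S2 \<le> L * S1 + \<gamma> * S1^2 / W"
      proof -
        have "Q \<le> lam * mU + (1 - lam) * mU * mU / mV" using Qb mVp
          by (simp add: field_simps)
        also have "(1 - lam) * mU * mU / mV \<le> P^2 / W"
        proof -
          have "(1 - lam) * mU * mU / mV = (1 - lam) * ((real k - 1) / real k) * (P^2 / W)"
            unfolding mUe mVe using kk k2 Wp by (simp add: field_simps power2_eq_square)
          also have "\<dots> \<le> 1 * 1 * (P^2 / W)"
            using lam lam1 kk Wp by (intro mult_right_mono mult_mono) auto
          finally show ?thesis by simp
        qed
        finally have "Q \<le> lam * mU + P^2 / W" by simp
        moreover have "P \<le> (real s - 1) / \<mu> * S1" using PS1 mu by (simp add: field_simps)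
        hence "P^2 \<le> ((real s - 1) / \<mu> * S1)^2" using Pnn by (intro power_mono) auto
        hence "P^2 / W \<le> \<gamma> * S1^2 / W"
        proof -
          assume h: "P^2 \<le> ((real s - 1) / \<mu> * S1)^2"
          have "P^2 / W \<le> ((real s - 1) / \<mu> * S1)^2 / W" using Wp h by (intro divide_right_mono) auto
          also have "\<dots> = \<gamma> * S1^2 / W" unfolding \<gamma>_def by (simp add: power_mult_distrib power_divide)
          finally show ?thesis .
        qed
        moreover have "lam * mU \<le> L * S1"
        proof -
          have "lam * mU = lam * (real k - 1) * P" unfolding mUe by simp
          also have "\<dots> \<le> lam * (real k - 1) * ((real s - 1) / \<mu> * S1)"
            using \<open>P \<le> (real s - 1) / \<mu> * S1\<close> lam kk by (intro mult_left_mono) auto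
          finally show ?thesis unfolding L_def by simp
        qed
        ultimately show ?thesis using S2Q by linarith
      qed
      have chebA: "S * S1 \<le> WA * S2"
      proof -
        have "(\<Sum>a\<in>A. wE T w a * fj a) * (\<Sum>a\<in>A. wE T w a * real (j a)) \<le> (\<Sum>a\<in>A. wE T w a) * (\<Sum>a\<in>A. wE T w a * (fj a * real (j a)))"
        proof (rule cheb[OF fA])
          show "\<forall>a\<in>A. 0 \<le> wE T w a" using wEnn by auto
          show "\<forall>a\<in>A. \<forall>b\<in>A. 0 \<le> (fj a - fj b) * (real (j a) - real (j b))"
          proof (intro ballI)
            fix a b
            show "0 \<le> (fj a - fj b) * (real (j a) - real (j b))"
            proof (cases "j a \<le> j b")
              case True
              hence "fj a \<le> fj b" unfolding fj_def by auto
              thus ?thesis using True by (intro mult_nonpos_nonpos) auto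
            next
              case False
              hence "fj a \<ge> fj b" unfolding fj_def by auto
              thus ?thesis using False by (intro mult_nonneg_nonneg) auto
            qed
          qed
        qed
        thus ?thesis unfolding S_def S1_def S2_def WA_def wEs_def .
      qed
      have S1WA: "S1 \<le> WA + S"
      proof -
        have "S1 \<le> (\<Sum>\<tau>\<in>A. wE T w \<tau> * (1 + fj \<tau>))" unfolding S1_def
        proof (intro sum_mono)
          fix \<tau>
          have "real (j \<tau>) \<le> 1 + fj \<tau>" unfolding fj_def by auto
          thus "wE T w \<tau> * real (j \<tau>) \<le> wE T w \<tau> * (1 + fj \<tau>)" using wEnn by (intro mult_left_mono) auto
        qed
        also have "\<dots> = WA + S" unfolding WA_def wEs_def S_def by (simp add: algebra_simps sum.distrib)
        finally show ?thesis .
      qed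
      have SS1: "S \<le> S1" unfolding S_def S1_def
      proof (intro sum_mono)
        fix \<tau>
        have "fj \<tau> \<le> real (j \<tau>)" unfolding fj_def by auto
        thus "wE T w \<tau> * fj \<tau> \<le> wE T w \<tau> * real (j \<tau>)" using wEnn by (intro mult_left_mono) auto
      qed
      define \<beta> where "\<beta> = \<gamma> * \<alpha>"
      define x where "x = S / WA"
      have gnn: "\<gamma> \<ge> 0" unfolding \<gamma>_def by simp
      have Lnn: "L \<ge> 0" unfolding L_def using lam kk s2 mu by simp
      have anni: "\<alpha> \<ge> 0" unfolding \<alpha>_def using WAp Wp by simp
      have bnn: "\<beta> \<ge> 0" unfolding \<beta>_def using gnn anni by simp
      have xnn: "x \<ge> 0" unfolding x_def using Snn WAp by simp
      have xb: "x \<le> L + \<beta> * (1 + x)"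
      proof (cases "S1 = 0")
        case True
        hence "S = 0" using SS1 Snn by simp
        hence "x = 0" unfolding x_def by simp
        thus ?thesis using Lnn bnn by simp
      next
        case False
        hence S1p: "S1 > 0" using S1nn by simp
        have "S * S1 \<le> WA * (L * S1 + \<gamma> * S1^2 / W)"
          using chebA S2b WAp by (meson mult_left_mono less_imp_le order_trans)
        also have "\<dots> = (WA * L + \<gamma> * S1 * (WA / W)) * S1" by (simp add: field_simps power2_eq_square)
        finally have "S \<le> WA * L + \<gamma> * S1 * (WA / W)" using S1p by simp
        also have "\<dots> \<le> WA * L + \<gamma> * (WA + S) * (WA / W)"
          using S1WA gnn WAp Wp by (intro add_left_mono mult_right_mono mult_left_mono) auto
        also have "\<dots> = WA * L + \<beta> * (WA + S)" unfolding \<beta>_def \<alpha>_def by (simp add: algebra_simps add_divide_distrib)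
        finally have "S \<le> WA * L + \<beta> * (WA + S)" .
        hence "S / WA \<le> (WA * L + \<beta> * (WA + S)) / WA" using WAp by (simp add: divide_right_mono)
        thus ?thesis unfolding x_def using WAp by (simp add: field_simps)
      qed
      have s3: "real s ^ 3 \<ge> 8" using s2
      proof -
        have "(2::real) ^ 3 \<le> real s ^ 3" using s2 by (intro power_mono) auto
        thus ?thesis by simp
      qed
      have sm1: "real s - 1 > 0" using s2 by simp
      have b4: "\<beta> \<le> 4 / real s ^ 3"
      proof -
        have "\<beta> = (real s - 1)^2 / \<mu>^2 * \<alpha>" unfolding \<beta>_def \<gamma>_def by simp
        also have "\<dots> \<le> (real s - 1)^2 / \<mu>^2 * (4 * \<mu>^2 / (real s ^ 3 * (real s - 1)^2))"
          using small unfolding \<alpha>_def WA_def W_def by (intro mult_left_mono) auto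
        also have "\<dots> = 4 / real s ^ 3" using mu sm1 by (simp add: field_simps)
        finally show ?thesis .
      qed
      have bh: "\<beta> \<le> 1/2"
      proof -
        have "4 / real s ^ 3 \<le> 4 / 8" using s3 s2 by (intro divide_left_mono) auto
        thus ?thesis using b4 by simp
      qed
      have b2: "2 * \<beta> \<le> real s ^ 3 / 4 * \<beta>" using s3 bnn by (intro mult_right_mono) auto
      have Lt: "L \<le> t"
      proof -
        have "L = 2 / real s * t" unfolding L_def t_def c_def using s2 mu by (simp add: field_simps)
        also have "\<dots> \<le> 1 * t" using s2 t01 by (intro mult_right_mono) auto
        finally show ?thesis by simp
      qed
      have fin1: "(1 - t) * x * (1 - \<beta>) \<le> (1 - \<beta>) * (t + 2 * \<beta>)"
      proof -
        have "x * (1 - \<beta>) \<le> L + \<beta>" using xb by (simp add: algebra_simps)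
        hence "(1 - t) * (x * (1 - \<beta>)) \<le> (1 - t) * (t + \<beta>)" using Lt t01 by (intro mult_left_mono) auto
        moreover have "(1 - t) * (t + \<beta>) \<le> (1 - \<beta>) * (t + 2 * \<beta>)"
        proof -
          have "(1 - \<beta>) * (t + 2 * \<beta>) - (1 - t) * (t + \<beta>) = \<beta> * (1 - 2 * \<beta>) + t^2"
            by (simp add: algebra_simps power2_eq_square)
          moreover have "\<beta> * (1 - 2 * \<beta>) \<ge> 0" using bnn bh by simp
          ultimately show ?thesis by (smt (verit) zero_le_power2)
        qed
        ultimately show ?thesis by (simp add: algebra_simps)
      qed
      have fin2: "(1 - t) * x \<le> t + 2 * \<beta>"
      proof -
        have "1 - \<beta> > 0" using bh by simp
        thus ?thesis using fin1 by (simp add: mult.commute mult_le_cancel_left_pos)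
      qed
      have "(1 - t) * x \<le> t + real s ^ 3 / 4 * \<beta>" using fin2 b2 by linarith
      moreover have "real s ^ 3 * (real s - 1)^2 / (4 * \<mu>^2) * (wEs T w A / wEs T w E) = real s ^ 3 / 4 * \<beta>"
        unfolding \<beta>_def \<gamma>_def \<alpha>_def WA_def W_def by (simp add: field_simps)
      ultimately show ?thesis unfolding sumconv x_def[symmetric] using t_def c_def by (simp add: mult.commute)
    qed
  qed
qed

end
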